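(* For all integers $K>t>1$, $$s\!\left(\binom{K}{t},\ K,\ \binom{K-1}{t-1}\right)=\frac{\binom{K}{t}(K-t)}{t+1}=\binom{K}{t+1}.$$
   Context: A placement delivery array $S$-PDA$(F,K,Z)$ is an $F\times K$ array $R=(r_{j,k})$, $1\le j\le F$, $1\le k\le K$, over a finite set $S$ such that: (1) each cell is either empty or contains an element of $S$; (2) each column contains exactly $Z$ empty cells; (3) each element of $S$ occurs at most once in each row and at most once in each column; (4) if two distinct nonempty cells satisfy $r_{j_1,k_1}=r_{j_2,k_2}=t\in S$, then the cells $r_{j_1,k_2}$ and $r_{j_2,k_1}$ are empty. For integers $F,K\ge1$, $0\le Z\le F$, define $s(F,K,Z)=\min\{|S| : \text{there exists an } S\text{-PDA}(F,K,Z)\}$. *)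

theory Defs
  imports Main
begin

text \<open>An F x K array over S: rows 0..F-1, columns 0..K-1; cell (j,k) is
  None (empty) or Some t with t in S. Symbols are taken to be natural numbers
  (any finite symbol set can be relabelled into nat).\<close>

definition is_PDA :: "nat set \<Rightarrow> nat \<Rightarrow> nat \<Rightarrow> nat \<Rightarrow> (nat \<Rightarrow> nat \<Rightarrow> nat option) \<Rightarrow> bool" where
  "is_PDA S F K Z R \<longleftrightarrow>
     finite S \<and>
     (\<forall>j<F. \<forall>k<K. \<forall>t. R j k = Some t \<longrightarrow> t \<in> S) \<and>
     (\<forall>k<K. card {j. j < F \<and> R j k = None} = Z) \<and>
     (\<forall>j<F. \<forall>k1<K. \<forall>k2<K. \<forall>t. R j k1 = Some t \<and> R j k2 = Some t \<longrightarrow> k1 = k2) \<and>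
     (\<forall>k<K. \<forall>j1<F. \<forall>j2<F. \<forall>t. R j1 k = Some t \<and> R j2 k = Some t \<longrightarrow> j1 = j2) \<and>
     (\<forall>j1<F. \<forall>j2<F. \<forall>k1<K. \<forall>k2<K. \<forall>t.
        (j1, k1) \<noteq> (j2, k2) \<and> R j1 k1 = Some t \<and> R j2 k2 = Some t \<longrightarrow>
        R j1 k2 = None \<and> R j2 k1 = None)"

definition s_PDA :: "nat \<Rightarrow> nat \<Rightarrow> nat \<Rightarrow> nat" where
  "s_PDA F K Z = (LEAST n. \<exists>S R. is_PDA S F K Z R \<and> card S = n)"

end

theory Submission
  imports Defs Complex_Main
begin

lemma pda_weight_bound:
  assumes P: "is_PDA S F K Z R"
  shows "(\<Sum>j<F. real (card {k. k<K \<and> R j k \<noteq> None}) / real (card {k. k<K \<and> R j k = None} + 1)) \<le> real (card S)"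
proof -
  note PD = P[unfolded is_PDA_def]
  note finS = PD[THEN conjunct1]
  note c1 = PD[THEN conjunct2, THEN conjunct1]
  note c3 = PD[THEN conjunct2, THEN conjunct2, THEN conjunct2, THEN conjunct2, THEN conjunct1]
  note c4 = PD[THEN conjunct2, THEN conjunct2, THEN conjunct2, THEN conjunct2, THEN conjunct2]
  define e where "e j = card {k. k<K \<and> R j k = None}" for j
  define C where "C = Sigma {..<F} (\<lambda>j. {k. k<K \<and> R j k \<noteq> None})"
  define w where "w c = 1 / real (e (fst c) + 1)" for c :: "nat \<times> nat"
  define sy where "sy c = the (R (fst c) (snd c))" for c :: "nat \<times> nat"
  have finC: "finite C" unfolding C_def by auto
  have "sum w C = (\<Sum>j<F. \<Sum>k\<in>{k. k<K \<and> R j k \<noteq> None}. w (j,k))"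
    unfolding C_def by (subst sum.Sigma) auto
  also have "\<dots> = (\<Sum>j<F. real (card {k. k<K \<and> R j k \<noteq> None}) / real (card {k. k<K \<and> R j k = None} + 1))"
    by (simp add: w_def e_def)
  finally have sumC: "sum w C = (\<Sum>j<F. real (card {k. k<K \<and> R j k \<noteq> None}) / real (card {k. k<K \<and> R j k = None} + 1))" .
  have img: "sy ` C \<subseteq> S"
  proof
    fix x assume "x \<in> sy ` C"
    then obtain j k where jk: "j<F" "k<K" "R j k \<noteq> None" "x = the (R j k)"
      unfolding C_def sy_def by auto
    then show "x \<in> S" using c1 by auto
  qed
  have grp: "sum w C = (\<Sum>s\<in>S. sum w {c\<in>C. sy c = s})"
    using sum.group[OF finC finS img, of w] by simp
  have each: "sum w {c\<in>C. sy c = s} \<le> 1" for s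
  proof -
    define D where "D = {c\<in>C. sy c = s}"
    have finD: "finite D" using finC unfolding D_def by auto
    have memD: "c \<in> D \<Longrightarrow> fst c < F \<and> snd c < K \<and> R (fst c) (snd c) = Some s" for c
      unfolding D_def C_def sy_def by auto
    show ?thesis
    proof (cases "D = {}")
      case True then show ?thesis unfolding D_def[symmetric] by simp
    next
      case False
      define g where "g = card D"
      have gpos: "g > 0" using False finD g_def by (simp add: card_gt_0_iff)
      have wle: "w c \<le> 1 / real g" if cD: "c \<in> D" for c
      proof -
        obtain j k where c: "c = (j,k)" by (cases c)
        have jk: "j < F" "k < K" "R j k = Some s" using memD[OF cD] c by auto
        have inj: "inj_on snd (D - {c})"
        proof (rule inj_onI)
          fix x y assume x: "x \<in> D - {c}" and y: "y \<in> D - {c}" and eq: "snd x = snd y"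
          have "fst x = fst y" using c3[rule_format, of "snd x" "fst x" "fst y" s] memD[of x] memD[of y] x y eq by auto
          then show "x = y" using eq by (simp add: prod_eq_iff)
        qed
        have sub: "snd ` (D - {c}) \<subseteq> {k. k<K \<and> R j k = None}"
        proof
          fix k' assume "k' \<in> snd ` (D - {c})"
          then obtain x where x: "x \<in> D" "x \<noteq> c" "k' = snd x" by auto
          have mx: "fst x < F" "snd x < K" "R (fst x) (snd x) = Some s" using memD[OF x(1)] by auto
          have "(j, k) \<noteq> (fst x, snd x)" using x(2) c by auto
          then have "R j (snd x) = None" using c4[rule_format, of j "fst x" k "snd x" s] jk mx by auto
          then show "k' \<in> {k. k<K \<and> R j k = None}" using x mx by auto
        qed
        have "card (D - {c}) \<le> e j"
          unfolding e_def using card_inj_on_le[OF inj sub] by simp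
        moreover have "card (D - {c}) = g - 1" using cD finD g_def by simp
        ultimately have "real g \<le> real (e j + 1)" using gpos by simp
        then show ?thesis unfolding w_def c using gpos by (simp add: frac_le)
      qed
      have "sum w D \<le> real (card D) * (1 / real g)"
        using sum_bounded_above[of D w "1 / real g"] wle by simp
      also have "\<dots> = 1" using gpos g_def by simp
      finally show ?thesis unfolding D_def .
    qed
  qed
  have "sum w C \<le> (\<Sum>s\<in>S. 1)" unfolding grp by (rule sum_mono) (rule each)
  then show ?thesis using sumC by simp
qed


lemma card_filter_sum: "card {k. k<(n::nat) \<and> P k} = (\<Sum>k<n. if P k then 1 else (0::nat))"
  using sum.inter_filter[OF finite_lessThan[of n], where g="\<lambda>_. 1::nat" and P=P] by simp

lemma card_split_sum: "card {k. k<(n::nat) \<and> P k} + card {k. k<n \<and> \<not> P k} = n"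
proof -
  have "card {k. k<n \<and> P k} + card {k. k<n \<and> \<not> P k}
      = (\<Sum>k<n. (if P k then 1 else 0) + (if \<not> P k then 1 else (0::nat)))"
    by (simp add: card_filter_sum[of n P] card_filter_sum[of n "\<lambda>k. \<not> P k"] sum.distrib)
  also have "\<dots> = (\<Sum>k<n. 1)" by (rule sum.cong) auto
  finally show ?thesis by simp
qed

lemma pda_empty_sum:
  assumes P: "is_PDA S F K Z R"
  shows "(\<Sum>j<F. card {k. k<K \<and> R j k = None}) = K * Z"
proof -
  have c2: "\<forall>k<K. card {j. j < F \<and> R j k = None} = Z"
    using P[unfolded is_PDA_def, THEN conjunct2, THEN conjunct2, THEN conjunct1] .
  have "(\<Sum>j<F. card {k. k<K \<and> R j k = None}) = (\<Sum>j<F. \<Sum>k<K. if R j k = None then 1 else (0::nat))"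
    by (simp add: card_filter_sum)
  also have "\<dots> = (\<Sum>k<K. \<Sum>j<F. if R j k = None then 1 else (0::nat))"
    by (rule sum.swap)
  also have "\<dots> = (\<Sum>k<K. card {j. j < F \<and> R j k = None})"
    by (simp add: card_filter_sum)
  also have "\<dots> = (\<Sum>k<K. Z)" using c2 by (intro sum.cong) auto
  finally show ?thesis by simp
qed

lemma tangent:
  fixes x t K :: real
  assumes "x \<ge> 0" "t \<ge> 0" "K \<ge> 0"
  shows "(K+1)*(2*t+1-x)/(t+1)^2 - 1 \<le> (K - x)/(x+1)"
proof -
  have "(2*t+1-x)*(x+1) \<le> (t+1)^2"
  proof -
    have "(t+1)^2 - (2*t+1-x)*(x+1) = (t - x)^2" by (simp add: power2_eq_square algebra_simps)
    then show ?thesis by (smt (verit) zero_le_power2)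
  qed
  then have "(2*t+1-x)/(t+1)^2 \<le> 1/(x+1)"
    using assms by (simp add: field_simps)
  then have "(K+1)*((2*t+1-x)/(t+1)^2) \<le> (K+1)*(1/(x+1))"
    using assms by (intro mult_left_mono) auto
  moreover have "(K - x)/(x+1) = (K+1)*(1/(x+1)) - 1" using assms by (simp add: field_simps)
  ultimately show ?thesis by simp
qed

lemma pda_lower:
  assumes P: "is_PDA S F K Z R" and KZ: "K * Z = t * F"
  shows "real F * (real K - real t) / (real t + 1) \<le> real (card S)"
proof -
  define e where "e j = card {k. k<K \<and> R j k = None}" for j
  have ne: "card {k. k<K \<and> R j k \<noteq> None} = K - e j" for j
    using card_split_sum[of K "\<lambda>k. R j k \<noteq> None"] unfolding e_def by simp
  have eK: "e j \<le> K" for j using card_split_sum[of K "\<lambda>k. R j k \<noteq> None"] unfolding e_def by simp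
  have L: "(\<Sum>j<F. (real K - real (e j)) / (real (e j) + 1)) \<le> real (card S)"
  proof -
    have "(\<Sum>j<F. (real K - real (e j)) / (real (e j) + 1))
       = (\<Sum>j<F. real (card {k. k<K \<and> R j k \<noteq> None}) / real (card {k. k<K \<and> R j k = None} + 1))"
      by (rule sum.cong) (simp_all only: ne e_def[symmetric] eK of_nat_diff of_nat_add of_nat_1)
    then show ?thesis using pda_weight_bound[OF P] by simp
  qed
  have sume: "(\<Sum>j<F. real (e j)) = real t * real F"
  proof -
    have "(\<Sum>j<F. e j) = t * F" using pda_empty_sum[OF P] KZ unfolding e_def by simp
    then have "real (\<Sum>j<F. e j) = real (t * F)" by simp
    then show ?thesis by simp
  qed
  have "(\<Sum>j<F. (real K+1)*(2*real t+1-real (e j))/(real t+1)^2 - 1)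
      \<le> (\<Sum>j<F. (real K - real (e j)) / (real (e j) + 1))"
    by (intro sum_mono tangent) auto
  also note L
  finally have A: "(\<Sum>j<F. (real K+1)*(2*real t+1-real (e j))/(real t+1)^2 - 1) \<le> real (card S)" .
  have "(\<Sum>j<F. (real K+1)*(2*real t+1-real (e j))/(real t+1)^2 - 1)
     = (real K+1)/(real t+1)^2 * (\<Sum>j<F. (2*real t+1-real (e j))) - real F"
  proof -
    define c where "c = (real K+1)/(real t+1)^2"
    have "(\<Sum>j<F. (real K+1)*(2*real t+1-real (e j))/(real t+1)^2 - 1)
        = (\<Sum>j<F. c * (2*real t+1-real (e j)) - 1)"
      unfolding c_def by (rule sum.cong) auto
    also have "\<dots> = (\<Sum>j<F. c * (2*real t+1-real (e j))) - real F"
      by (simp add: sum_subtractf)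
    also have "(\<Sum>j<F. c * (2*real t+1-real (e j))) = c * (\<Sum>j<F. (2*real t+1-real (e j)))"
      by (rule sum_distrib_left[symmetric])
    finally show ?thesis unfolding c_def .
  qed
  also have "(\<Sum>j<F. (2*real t+1-real (e j))) = real F * (2*real t + 1) - real t * real F"
    by (simp add: sum_subtractf sume)
  also have "(real K+1)/(real t+1)^2 * (real F * (2*real t + 1) - real t * real F) - real F
      = real F * (real K - real t) / (real t + 1)"
  proof -
    have tp: "real t + 1 \<noteq> 0" by simp
    have "real F * (2*real t + 1) - real t * real F = real F * (real t + 1)" by (simp add: algebra_simps)
    moreover have "(real K+1)/(real t+1)^2 * (real F * (real t + 1)) = (real K+1) * real F/(real t+1)"
    proof -
      have gen: "\<And>a::real. a \<noteq> 0 \<Longrightarrow> (real K+1)/a^2 * (real F * a) = (real K+1) * real F / a"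
        by (simp add: power2_eq_square field_simps)
      show ?thesis using gen[OF tp] .
    qed
    moreover have "(real K+1) * real F/(real t+1) - real F = real F * (real K - real t) / (real t + 1)"
      using tp by (simp add: field_simps)
    ultimately show ?thesis by simp
  qed
  finally show ?thesis using A by simp
qed


lemma construction:
  assumes t0: "0 < t" and tK: "t < K"
  shows "\<exists>S R. is_PDA S (K choose t) K ((K-1) choose (t-1)) R \<and> card S = K choose (t+1)"
proof -
  define A where "A = {..<K}"
  define Fam where "Fam m = {T. T \<subseteq> A \<and> card T = m}" for m
  have finA: "finite A" unfolding A_def by simp
  have cardA: "card A = K" unfolding A_def by simp
  have cardFam: "card (Fam m) = K choose m" for m
    unfolding Fam_def using n_subsets[OF finA] cardA by simp
  have finFam: "finite (Fam m)" for m
  proof -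
    have "Fam m \<subseteq> Pow A" unfolding Fam_def by auto
    then show ?thesis using finA by (meson finite_Pow_iff finite_subset)
  qed
  obtain h where h: "bij_betw h {0..<K choose t} (Fam t)"
    using ex_bij_betw_nat_finite[OF finFam[of t]] cardFam by auto
  obtain g where g: "bij_betw g (Fam (t+1)) {0..<K choose (t+1)}"
    using ex_bij_betw_finite_nat[OF finFam[of "t+1"]] cardFam by auto
  define F where "F = K choose t"
  define R where "R j k = (if k \<in> h j then None else Some (g (insert k (h j))))" for j k
  define S where "S = {0..<K choose (t+1)}"
  have hF: "j < F \<Longrightarrow> h j \<in> Fam t" for j using h unfolding F_def bij_betw_def by auto
  have hsub: "j < F \<Longrightarrow> h j \<subseteq> A" for j using hF unfolding Fam_def by auto
  have hcard: "j < F \<Longrightarrow> card (h j) = t" for j using hF unfolding Fam_def by auto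
  have hfin: "j < F \<Longrightarrow> finite (h j)" for j using hsub finA finite_subset by blast
  have ins: "j < F \<Longrightarrow> k < K \<Longrightarrow> k \<notin> h j \<Longrightarrow> insert k (h j) \<in> Fam (t+1)" for j k
    using hsub hcard hfin unfolding Fam_def A_def by auto
  have ginj: "inj_on g (Fam (t+1))" using g bij_betw_imp_inj_on by blast
  have hinj: "inj_on h {0..<F}" using h bij_betw_imp_inj_on unfolding F_def by blast
  have gS: "T \<in> Fam (t+1) \<Longrightarrow> g T \<in> S" for T using g unfolding S_def bij_betw_def by auto
  have Rsome: "R j k = Some s \<Longrightarrow> k \<notin> h j \<and> s = g (insert k (h j))" for j k s
    unfolding R_def by (auto split: if_splits)
  have geq: "j1 < F \<Longrightarrow> j2 < F \<Longrightarrow> k1 < K \<Longrightarrow> k2 < K \<Longrightarrow> k1 \<notin> h j1 \<Longrightarrow> k2 \<notin> h j2 \<Longrightarrow>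
      g (insert k1 (h j1)) = g (insert k2 (h j2)) \<Longrightarrow> insert k1 (h j1) = insert k2 (h j2)" for j1 j2 k1 k2
    using ginj ins unfolding inj_on_def by blast
  have colcard: "card {j. j < F \<and> R j k = None} = (K-1) choose (t-1)" if kK: "k < K" for k
  proof -
    have e1: "{j. j < F \<and> R j k = None} = {j\<in>{0..<F}. k \<in> h j}" unfolding R_def by auto
    have "h ` {j\<in>{0..<F}. k \<in> h j} = {T \<in> h ` {0..<F}. k \<in> T}" by blast
    also have "h ` {0..<F} = Fam t" using h unfolding F_def bij_betw_def by auto
    finally have "h ` {j\<in>{0..<F}. k \<in> h j} = {T \<in> Fam t. k \<in> T}" .
    moreover have "inj_on h {j\<in>{0..<F}. k \<in> h j}" using hinj by (rule inj_on_subset) auto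
    ultimately have c1: "card {j. j < F \<and> R j k = None} = card {T \<in> Fam t. k \<in> T}"
      unfolding e1 by (metis card_image)
    have "Fam t = {T \<in> Fam t. k \<in> T} \<union> {T \<in> Fam t. k \<notin> T}" by auto
    then have "card (Fam t) = card {T \<in> Fam t. k \<in> T} + card {T \<in> Fam t. k \<notin> T}"
      using finFam[of t] by (metis (no_types, lifting) card_Un_disjoint disjoint_iff finite_Un mem_Collect_eq)
    moreover have "{T \<in> Fam t. k \<notin> T} = {T. T \<subseteq> A - {k} \<and> card T = t}" unfolding Fam_def by auto
    moreover have "card (A - {k}) = K - 1" using kK cardA finA unfolding A_def by simp
    ultimately have "K choose t = card {T \<in> Fam t. k \<in> T} + ((K - 1) choose t)"
      using n_subsets[of "A - {k}" t] finA cardFam by simp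
    moreover have "K choose t = ((K-1) choose (t-1)) + ((K-1) choose t)"
    proof -
      have "K = Suc (K-1)" "t = Suc (t-1)" using t0 tK by auto
      then have "K choose t = Suc (K-1) choose Suc (t-1)" by simp
      also have "\<dots> = ((K-1) choose (t-1)) + ((K-1) choose Suc (t-1))" by simp
      finally show ?thesis using \<open>t = Suc (t-1)\<close> by simp
    qed
    ultimately show ?thesis using c1 by simp
  qed
  have c4h: "k2 \<in> h j1" if a: "j1 < F" "j2 < F" "k1 < K" "k2 < K"
      "(j1, k1) \<noteq> (j2, k2)" "R j1 k1 = Some s" "R j2 k2 = Some s" for j1 j2 k1 k2 s
  proof -
    have eq: "insert k1 (h j1) = insert k2 (h j2)" and n1: "k1 \<notin> h j1" and n2: "k2 \<notin> h j2"
      using a Rsome geq by blast+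
    have "k1 \<noteq> k2"
    proof
      assume "k1 = k2"
      then have "h j1 = h j2" using eq n1 n2 insert_ident by metis
      then have "j1 = j2" using hinj a unfolding inj_on_def by auto
      then show False using a \<open>k1 = k2\<close> by auto
    qed
    then show "k2 \<in> h j1" using eq by (metis insertE insertI1)
  qed
  have "is_PDA S F K ((K-1) choose (t-1)) R"
    unfolding is_PDA_def
  proof (intro conjI allI impI)
    show "finite S" unfolding S_def by simp
  next
    fix j k s assume "j < F" "k < K" "R j k = Some s"
    then show "s \<in> S" using Rsome ins gS by blast
  next
    fix k assume "k < K" then show "card {j. j < F \<and> R j k = None} = (K-1) choose (t-1)" by (rule colcard)
  next
    fix j k1 k2 s assume a: "j < F" "k1 < K" "k2 < K" "R j k1 = Some s \<and> R j k2 = Some s"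
    then have "insert k1 (h j) = insert k2 (h j)" "k1 \<notin> h j" "k2 \<notin> h j"
      using Rsome geq by blast+
    then show "k1 = k2" by blast
  next
    fix k j1 j2 s assume a: "k < K" "j1 < F" "j2 < F" "R j1 k = Some s \<and> R j2 k = Some s"
    then have "insert k (h j1) = insert k (h j2)" "k \<notin> h j1" "k \<notin> h j2"
      using Rsome geq by blast+
    then have "h j1 = h j2" using insert_ident by metis
    then show "j1 = j2" using hinj a unfolding inj_on_def by auto
  next
    fix j1 j2 k1 k2 s assume a: "j1 < F" "j2 < F" "k1 < K" "k2 < K"
      "(j1, k1) \<noteq> (j2, k2) \<and> R j1 k1 = Some s \<and> R j2 k2 = Some s"
    then show "R j1 k2 = None" using c4h[of j1 j2 k1 k2 s] unfolding R_def by simp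
  next
    fix j1 j2 k1 k2 s assume a: "j1 < F" "j2 < F" "k1 < K" "k2 < K"
      "(j1, k1) \<noteq> (j2, k2) \<and> R j1 k1 = Some s \<and> R j2 k2 = Some s"
    then show "R j2 k1 = None" using c4h[of j2 j1 k2 k1 s] unfolding R_def by auto
  qed
  moreover have "card S = K choose (t+1)" unfolding S_def by simp
  ultimately show ?thesis unfolding F_def by blast
qed

theorem mainTheorem11:
  fixes K t :: nat
  assumes "1 < t" and "t < K"
  shows "s_PDA (K choose t) K ((K - 1) choose (t - 1)) = (K choose t) * (K - t) div (t + 1)
       \<and> (K choose t) * (K - t) div (t + 1) = K choose (t + 1)
       \<and> (t + 1) dvd (K choose t) * (K - t)"
proof -
  have K1: "Suc (K-1) = K" using assms by simp
  have t1: "Suc (t-1) = t" using assms by simp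
  have KZ: "K * ((K - 1) choose (t - 1)) = t * (K choose t)"
    using Suc_times_binomial_eq[of "K-1" "t-1"] K1 t1 by (simp add: mult.commute)
  have id2: "(K choose t) * (K - t) = (K choose (t+1)) * (t+1)"
    using binomial_absorb_comp[of K t] Suc_times_binomial_eq[of "K-1" t] K1
    by (simp add: mult.commute)
  have d: "(K choose t) * (K - t) div (t + 1) = K choose (t + 1)"
    unfolding id2 by (rule nonzero_mult_div_cancel_right) simp
  have dv: "(t + 1) dvd (K choose t) * (K - t)" unfolding id2 by (rule dvd_triv_right)
  have s: "s_PDA (K choose t) K ((K - 1) choose (t - 1)) = K choose (t + 1)"
    unfolding s_PDA_def
  proof (rule Least_equality)
    show "\<exists>S R. is_PDA S (K choose t) K ((K - 1) choose (t - 1)) R \<and> card S = K choose (t + 1)"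
      using construction[of t K] assms by simp
  next
    fix y assume "\<exists>S R. is_PDA S (K choose t) K ((K - 1) choose (t - 1)) R \<and> card S = y"
    then obtain S R where P: "is_PDA S (K choose t) K ((K - 1) choose (t - 1)) R" and y: "card S = y"
      by blast
    have lo: "real (K choose t) * (real K - real t) / (real t + 1) \<le> real (card S)"
      using pda_lower[OF P KZ] .
    have "real (K choose t) * (real K - real t) = real (K choose (t+1)) * (real t + 1)"
    proof -
      have "real ((K choose t) * (K - t)) = real ((K choose (t+1)) * (t+1))" using id2 by simp
      then show ?thesis using assms by (simp add: of_nat_diff algebra_simps)
    qed
    then have "real (K choose t) * (real K - real t) / (real t + 1) = real (K choose (t+1))"
      by (simp add: field_simps)
    then show "K choose (t + 1) \<le> y" using lo y by simp
  qed
  show ?thesis using s d dv by simp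
qed

end
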